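(* Let $I\subset\mathbb{R}$ be an interval, let $a,c,g:I\to\mathbb{R}$ be given functions and $b_1,b_2,c_1,c_2$ real constants. Suppose $\beta,\gamma,\varepsilon$ are differentiable on $I$ with $$\beta'=c\beta,\qquad \gamma'=a\beta^2,\qquad \varepsilon'=-g\beta.$$ If $u(\xi,\tau),v(\xi,\tau)$ solve the coupled Burgers system $$u_\tau=u_{\xi\xi}-b_1uu_\xi-c_1(uv)_\xi,\qquad v_\tau=v_{\xi\xi}-b_2vv_\xi-c_2(uv)_\xi,$$ then $\psi(x,t)=\beta(t)u(\xi,\tau)$, $\varphi(x,t)=\beta(t)v(\xi,\tau)$, with $\xi=\beta(t)x+\varepsilon(t)$, $\tau=\gamma(t)$, solve $$\psi_t=a(t)\psi_{xx}-b_1a(t)\psi\psi_x-c_1a(t)(\psi\varphi)_x+c(t)(\psi+x\psi_x)-g(t)\psi_x,$$ $$\varphi_t=a(t)\varphi_{xx}-b_2a(t)\varphi\varphi_x-c_2a(t)(\psi\varphi)_x+c(t)(\varphi+x\varphi_x)-g(t)\varphi_x.$$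
   Context: All functions are real-valued; primes denote derivatives with respect to $t$. *)

theory Defs
  imports "HOL-Analysis.Analysis"
begin

end

theory Submission
  imports Defs
begin

lemma chain2:
  fixes u :: "real \<Rightarrow> real \<Rightarrow> real"
  assumes U: "((\<lambda>p. u (fst p) (snd p)) has_derivative (\<lambda>h. fst h * A + snd h * B)) (at (p1 t, p2 t))"
    and P1: "(p1 has_real_derivative d1) (at t within S)"
    and P2: "(p2 has_real_derivative d2) (at t within S)"
  shows "((\<lambda>s. u (p1 s) (p2 s)) has_real_derivative (d1*A + d2*B)) (at t within S)"
proof -
  have P: "((\<lambda>s. (p1 s, p2 s)) has_derivative (\<lambda>h. (d1*h, d2*h))) (at t within S)"
    using has_derivative_Pair[OF P1[unfolded has_field_derivative_def] P2[unfolded has_field_derivative_def]] .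
  have U': "((\<lambda>p. u (fst p) (snd p)) has_derivative (\<lambda>h. fst h * A + snd h * B)) (at ((\<lambda>s. (p1 s, p2 s)) t) within (\<lambda>s. (p1 s, p2 s)) ` S)"
    using has_derivative_at_withinI[OF U] by simp
  have "(((\<lambda>p. u (fst p) (snd p)) \<circ> (\<lambda>s. (p1 s, p2 s))) has_derivative ((\<lambda>h. fst h * A + snd h * B) \<circ> (\<lambda>h. (d1*h, d2*h)))) (at t within S)"
    by (rule diff_chain_within[OF P U'])
  then have "((\<lambda>s. u (p1 s) (p2 s)) has_derivative (\<lambda>h. d1 * h * A + d2 * h * B)) (at t within S)"
    by (simp add: o_def)
  then show ?thesis unfolding has_field_derivative_def
    by (rule has_derivative_eq_rhs) (simp add: fun_eq_iff algebra_simps)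
qed

theorem theorem5:
  fixes I :: "real set"
    and a c g \<beta> \<gamma> \<epsilon> :: "real \<Rightarrow> real"
    and b1 b2 c1 c2 :: real
    and u v ux vx uxx vxx ut vt :: "real \<Rightarrow> real \<Rightarrow> real"
  assumes I: "is_interval I"
    and beta: "\<And>t. t \<in> I \<Longrightarrow> (\<beta> has_real_derivative (c t * \<beta> t)) (at t within I)"
    and gamma: "\<And>t. t \<in> I \<Longrightarrow> (\<gamma> has_real_derivative (a t * (\<beta> t)\<^sup>2)) (at t within I)"
    and eps: "\<And>t. t \<in> I \<Longrightarrow> (\<epsilon> has_real_derivative (- g t * \<beta> t)) (at t within I)"
    and u_diff: "\<And>\<xi> \<tau>. ((\<lambda>p. u (fst p) (snd p)) has_derivative
                    (\<lambda>h. fst h * ux \<xi> \<tau> + snd h * ut \<xi> \<tau>)) (at (\<xi>, \<tau>))"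
    and v_diff: "\<And>\<xi> \<tau>. ((\<lambda>p. v (fst p) (snd p)) has_derivative
                    (\<lambda>h. fst h * vx \<xi> \<tau> + snd h * vt \<xi> \<tau>)) (at (\<xi>, \<tau>))"
    and ux_diff: "\<And>\<xi> \<tau>. ((\<lambda>s. ux s \<tau>) has_real_derivative uxx \<xi> \<tau>) (at \<xi>)"
    and vx_diff: "\<And>\<xi> \<tau>. ((\<lambda>s. vx s \<tau>) has_real_derivative vxx \<xi> \<tau>) (at \<xi>)"
    and u_eq: "\<And>\<xi> \<tau>. ut \<xi> \<tau> = uxx \<xi> \<tau> - b1 * u \<xi> \<tau> * ux \<xi> \<tau>
                   - c1 * (ux \<xi> \<tau> * v \<xi> \<tau> + u \<xi> \<tau> * vx \<xi> \<tau>)"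
    and v_eq: "\<And>\<xi> \<tau>. vt \<xi> \<tau> = vxx \<xi> \<tau> - b2 * v \<xi> \<tau> * vx \<xi> \<tau>
                   - c2 * (ux \<xi> \<tau> * v \<xi> \<tau> + u \<xi> \<tau> * vx \<xi> \<tau>)"
  defines "\<psi> \<equiv> (\<lambda>x t. \<beta> t * u (\<beta> t * x + \<epsilon> t) (\<gamma> t))"
    and "\<phi> \<equiv> (\<lambda>x t. \<beta> t * v (\<beta> t * x + \<epsilon> t) (\<gamma> t))"
  shows "\<exists>\<psi>x \<psi>xx \<psi>t \<phi>x \<phi>xx \<phi>t :: real \<Rightarrow> real \<Rightarrow> real.
     \<forall>t\<in>I. \<forall>x.
       ((\<lambda>y. \<psi> y t) has_real_derivative \<psi>x x t) (at x) \<and>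
       ((\<lambda>y. \<psi>x y t) has_real_derivative \<psi>xx x t) (at x) \<and>
       ((\<lambda>s. \<psi> x s) has_real_derivative \<psi>t x t) (at t within I) \<and>
       ((\<lambda>y. \<phi> y t) has_real_derivative \<phi>x x t) (at x) \<and>
       ((\<lambda>y. \<phi>x y t) has_real_derivative \<phi>xx x t) (at x) \<and>
       ((\<lambda>s. \<phi> x s) has_real_derivative \<phi>t x t) (at t within I) \<and>
       \<psi>t x t = a t * \<psi>xx x t - b1 * a t * \<psi> x t * \<psi>x x t
                 - c1 * a t * (\<psi>x x t * \<phi> x t + \<psi> x t * \<phi>x x t)
                 + c t * (\<psi> x t + x * \<psi>x x t) - g t * \<psi>x x t \<and>
       \<phi>t x t = a t * \<phi>xx x t - b2 * a t * \<phi> x t * \<phi>x x t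
                 - c2 * a t * (\<psi>x x t * \<phi> x t + \<psi> x t * \<phi>x x t)
                 + c t * (\<phi> x t + x * \<phi>x x t) - g t * \<phi>x x t"
proof -
  let ?xi = "\<lambda>x t. \<beta> t * x + \<epsilon> t"
  show ?thesis
  proof (intro exI ballI allI conjI)
    fix t x assume t: "t \<in> I"
    have X: "((\<lambda>y. \<beta> t * y + \<epsilon> t) has_real_derivative \<beta> t) (at y)" for y
      by (auto intro!: derivative_eq_intros)
    have K: "((\<lambda>y. \<gamma> t) has_real_derivative 0) (at y)" for y
      by (auto intro!: derivative_eq_intros)
    have S: "((\<lambda>s. \<beta> s * x + \<epsilon> s) has_real_derivative (c t * \<beta> t * x + (- g t * \<beta> t))) (at t within I)"
      using beta[OF t] eps[OF t] by (auto intro!: derivative_eq_intros)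
    have ux1: "((\<lambda>y. u (\<beta> t * y + \<epsilon> t) (\<gamma> t)) has_real_derivative (\<beta> t * ux (\<beta> t * y + \<epsilon> t) (\<gamma> t) + 0 * ut (\<beta> t * y + \<epsilon> t) (\<gamma> t))) (at y)" for y
      by (rule chain2[OF u_diff X K])
    have vx1: "((\<lambda>y. v (\<beta> t * y + \<epsilon> t) (\<gamma> t)) has_real_derivative (\<beta> t * vx (\<beta> t * y + \<epsilon> t) (\<gamma> t) + 0 * vt (\<beta> t * y + \<epsilon> t) (\<gamma> t))) (at y)" for y
      by (rule chain2[OF v_diff X K])
    have ut1: "((\<lambda>s. u (\<beta> s * x + \<epsilon> s) (\<gamma> s)) has_real_derivative ((c t * \<beta> t * x + (- g t * \<beta> t)) * ux (\<beta> t * x + \<epsilon> t) (\<gamma> t) + (a t * (\<beta> t)\<^sup>2) * ut (\<beta> t * x + \<epsilon> t) (\<gamma> t))) (at t within I)"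
      by (rule chain2[OF u_diff S gamma[OF t]])
    have vt1: "((\<lambda>s. v (\<beta> s * x + \<epsilon> s) (\<gamma> s)) has_real_derivative ((c t * \<beta> t * x + (- g t * \<beta> t)) * vx (\<beta> t * x + \<epsilon> t) (\<gamma> t) + (a t * (\<beta> t)\<^sup>2) * vt (\<beta> t * x + \<epsilon> t) (\<gamma> t))) (at t within I)"
      by (rule chain2[OF v_diff S gamma[OF t]])
    have uxx1: "((\<lambda>y. ux (\<beta> t * y + \<epsilon> t) (\<gamma> t)) has_real_derivative uxx (\<beta> t * x + \<epsilon> t) (\<gamma> t) * \<beta> t) (at x)"
      by (rule DERIV_chain2[OF ux_diff X])
    have vxx1: "((\<lambda>y. vx (\<beta> t * y + \<epsilon> t) (\<gamma> t)) has_real_derivative vxx (\<beta> t * x + \<epsilon> t) (\<gamma> t) * \<beta> t) (at x)"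
      by (rule DERIV_chain2[OF vx_diff X])
    show "((\<lambda>y. \<psi> y t) has_real_derivative (\<lambda>x t. \<beta> t ^ 2 * ux (\<beta> t * x + \<epsilon> t) (\<gamma> t)) x t) (at x)"
      unfolding \<psi>_def using DERIV_cmult[OF ux1, of "\<beta> t"] by (simp add: power2_eq_square mult.assoc)
    show "((\<lambda>y. \<phi> y t) has_real_derivative (\<lambda>x t. \<beta> t ^ 2 * vx (\<beta> t * x + \<epsilon> t) (\<gamma> t)) x t) (at x)"
      unfolding \<phi>_def using DERIV_cmult[OF vx1, of "\<beta> t"] by (simp add: power2_eq_square mult.assoc)
    show "((\<lambda>y. (\<lambda>x t. \<beta> t ^ 2 * ux (\<beta> t * x + \<epsilon> t) (\<gamma> t)) y t) has_real_derivative (\<lambda>x t. \<beta> t ^ 3 * uxx (\<beta> t * x + \<epsilon> t) (\<gamma> t)) x t) (at x)"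
      using DERIV_cmult[OF uxx1, of "\<beta> t ^ 2"] by (simp add: power3_eq_cube power2_eq_square algebra_simps)
    show "((\<lambda>y. (\<lambda>x t. \<beta> t ^ 2 * vx (\<beta> t * x + \<epsilon> t) (\<gamma> t)) y t) has_real_derivative (\<lambda>x t. \<beta> t ^ 3 * vxx (\<beta> t * x + \<epsilon> t) (\<gamma> t)) x t) (at x)"
      using DERIV_cmult[OF vxx1, of "\<beta> t ^ 2"] by (simp add: power3_eq_cube power2_eq_square algebra_simps)
    show "((\<lambda>s. \<psi> x s) has_real_derivative (\<lambda>x t. c t * \<beta> t * u (\<beta> t * x + \<epsilon> t) (\<gamma> t) + \<beta> t * ((c t * \<beta> t * x + (- g t * \<beta> t)) * ux (\<beta> t * x + \<epsilon> t) (\<gamma> t) + (a t * (\<beta> t)\<^sup>2) * ut (\<beta> t * x + \<epsilon> t) (\<gamma> t))) x t) (at t within I)"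
      unfolding \<psi>_def using DERIV_mult'[OF beta[OF t] ut1] by (simp add: algebra_simps)
    show "((\<lambda>s. \<phi> x s) has_real_derivative (\<lambda>x t. c t * \<beta> t * v (\<beta> t * x + \<epsilon> t) (\<gamma> t) + \<beta> t * ((c t * \<beta> t * x + (- g t * \<beta> t)) * vx (\<beta> t * x + \<epsilon> t) (\<gamma> t) + (a t * (\<beta> t)\<^sup>2) * vt (\<beta> t * x + \<epsilon> t) (\<gamma> t))) x t) (at t within I)"
      unfolding \<phi>_def using DERIV_mult'[OF beta[OF t] vt1] by (simp add: algebra_simps)
  qed (auto simp: \<psi>_def \<phi>_def u_eq v_eq algebra_simps power2_eq_square power3_eq_cube)
qed

end
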